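(* Fix $\beta>0$, $k\in\mathbb{N}$ and $0<t_0<t<\infty$. Let $(C_n)_{n\ge1}$ be the solution on $[t_0,t]$ of $$C_1\equiv1,\qquad \dot C_n=\frac{k+1}{k}(n-1)B\,C_n+\frac{n\Gamma}{2}\sum_{j=1}^{n-1}C_jC_{n-j}\quad(2\le n\le k),$$ $$\dot C_n=nB\,C_n+\frac{n\Gamma}{2}\sum_{j=1}^{n-1}C_jC_{n-j}\quad(n>k),\qquad C_n(t_0)=0\ (n\ge2)$$ (these are the coefficient equations of $\Theta_t=\Gamma(z^2\Theta^2)_z+B((z\Theta)_z-L_k)$, $\Theta(t_0,\cdot)=1$, with Lagrange multiplier $L_k=1+\sum_{j=1}^{k-1}(1-j/k)C_{j+1}z^j$), and set $\Theta(t,z)=\sum_{n\ge1}C_n(t)z^{n-1}$. Let $$\tau_k(t_0,t)=\int_{t_0}^t\Gamma(s)\exp\!\Big(\frac{k+1}{k}\int_s^tB(s')\,ds'\Big)ds .$$ Then for every $z\ge0$ with $e\,z\,\tau_k(t_0,t)<1$ the series converges and $$\Theta(t,z)\le\frac{-1}{\tau_k(t_0,t)\,z}\,W\!\left(-\tau_k(t_0,t)\,z\right).$$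
   Context: $g(s)=-\frac{s}{4\pi}\int_s^\infty K_0'''(r)\frac{r}{\sqrt{r^2-s^2}}dr$ for $s>0$ (a positive function), $K_0$ the modified Bessel function of the second kind of order $0$. $\Gamma(t)=\frac{\beta\pi}{4}t^2g(t)$ and $B(t)=\frac{\beta}{2}g(t)$. $W$ is the principal branch of the Lambert $W$ function, with $-W(-x)/x=\sum_{n\ge1}\frac{n^{n-1}}{n!}x^{n-1}$ for $0\le x\le1/e$ (value $1$ at $x=0$). *)

theory Defs
  imports "HOL-Analysis.Analysis"
begin

definition besselK0 :: "real \<Rightarrow> real" where
  "besselK0 r = integral {0..} (\<lambda>u. exp (- r * cosh u))"

definition gfun :: "real \<Rightarrow> real" where
  "gfun s = - (s / (4 * pi)) *
     integral {s<..} (\<lambda>r. (deriv ^^ 3) besselK0 r * r / sqrt (r\<^sup>2 - s\<^sup>2))"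

definition Gam :: "real \<Rightarrow> real \<Rightarrow> real" where
  "Gam \<beta> t = \<beta> * pi / 4 * t\<^sup>2 * gfun t"

definition Bfun :: "real \<Rightarrow> real \<Rightarrow> real" where
  "Bfun \<beta> t = \<beta> / 2 * gfun t"

definition lambertW :: "real \<Rightarrow> real" where
  "lambertW y = (THE w. w \<ge> -1 \<and> w * exp w = y)"

definition tau :: "real \<Rightarrow> nat \<Rightarrow> real \<Rightarrow> real \<Rightarrow> real" where
  "tau \<beta> k t0 t = integral {t0..t}
     (\<lambda>s. Gam \<beta> s * exp ((real k + 1) / real k * integral {s..t} (Bfun \<beta>)))"

end

theory Submission
  imports Defs
begin
lemma pow_le_fact_exp: fixes y :: real assumes "0 \<le> y" shows "y ^ j \<le> fact j * exp y"
proof -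
  obtain t where t: "\<bar>t\<bar> \<le> \<bar>y\<bar>" "exp y = (\<Sum>m<Suc j. y ^ m / fact m) + exp t / fact (Suc j) * y ^ Suc j"
    using Maclaurin_exp_le[of y "Suc j"] by blast
  have "y ^ j / fact j \<le> (\<Sum>m<Suc j. y ^ m / fact m)"
    by (rule member_le_sum[where f="\<lambda>m. y ^ m / fact m"]) (use assms in auto)
  also have "\<dots> \<le> exp y" using t(2) assms by (simp add: zero_le_mult_iff)
  finally show ?thesis by (simp add: field_simps)
qed

lemma taylor2_exp: fixes x :: real shows "\<bar>exp x - 1 - x\<bar> \<le> exp \<bar>x\<bar> * x^2 / 2"
proof -
  obtain t where t: "\<bar>t\<bar> \<le> \<bar>x\<bar>" "exp x = (\<Sum>m<2. x ^ m / fact m) + exp t / fact 2 * x ^ 2"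
    using Maclaurin_exp_le[of x 2] by blast
  have s: "(\<Sum>m<2. x ^ m / fact m) = 1 + x" by (simp add: numeral_2_eq_2)
  have eq: "exp x - 1 - x = exp t / 2 * x^2" using t(2) s by simp
  have "exp t \<le> exp \<bar>x\<bar>" using t(1) by simp
  have "\<bar>exp x - 1 - x\<bar> = exp t / 2 * x^2" unfolding eq by simp
  also have "\<dots> \<le> exp \<bar>x\<bar> / 2 * x^2"
    using \<open>exp t \<le> exp \<bar>x\<bar>\<close> by (intro mult_right_mono divide_right_mono) auto
  finally show ?thesis by simp
qed

lemma cosh_ge_half: fixes u :: real assumes "0 \<le> u" shows "u / 2 \<le> cosh u"
proof -
  have "1 + u \<le> exp u" by simp
  moreover have "0 < exp (-u)" by simp
  ultimately have "u \<le> exp u + exp (-u)" by linarith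
  then show ?thesis unfolding cosh_def by simp
qed

lemma kern_bound:
  fixes \<rho> u :: real assumes "0 < \<rho>" "0 \<le> u"
  shows "cosh u ^ j * exp (- \<rho> * cosh u) \<le> fact j * (2/\<rho>)^j * exp (- (\<rho>/4) * u)"
proof -
  have "cosh u ^ j = (2/\<rho>)^j * (\<rho> * cosh u / 2)^j" using assms by (simp add: power_mult_distrib[symmetric])
  also have "\<dots> \<le> (2/\<rho>)^j * (fact j * exp (\<rho> * cosh u / 2))"
    using assms by (intro mult_left_mono pow_le_fact_exp) auto
  finally have 1: "cosh u ^ j \<le> (2/\<rho>)^j * (fact j * exp (\<rho> * cosh u / 2))" .
  have e0: "\<rho> * cosh u / 2 + (- \<rho> * cosh u) = - (\<rho> * cosh u / 2)" by simp
  have e: "exp (\<rho> * cosh u / 2) * exp (- \<rho> * cosh u) = exp (- (\<rho> * cosh u / 2))"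
    by (metis e0 exp_add)
  have "cosh u ^ j * exp (- \<rho> * cosh u) \<le> (2/\<rho>)^j * (fact j * exp (\<rho> * cosh u / 2)) * exp (- \<rho> * cosh u)"
    by (rule mult_right_mono[OF 1]) simp
  also have "\<dots> = fact j * (2/\<rho>)^j * (exp (\<rho> * cosh u / 2) * exp (- \<rho> * cosh u))"
    by (simp only: mult_ac)
  also have "\<dots> = fact j * (2/\<rho>)^j * exp (- (\<rho> * cosh u / 2))"
    by (simp only: e)
  also have "\<dots> \<le> fact j * (2/\<rho>)^j * exp (- (\<rho>/4) * u)"
    using assms cosh_ge_half[OF assms(2)] by (intro mult_left_mono) (auto simp: field_simps)
  finally show ?thesis .
qed

definition Kf :: "nat \<Rightarrow> real \<Rightarrow> real" where
  "Kf j r = integral {0..} (\<lambda>u. cosh u ^ j * exp (- r * cosh u))"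

lemma kern_integrable:
  fixes \<rho> :: real
  assumes "0 < \<rho>" shows "(\<lambda>u::real. cosh u ^ j * exp (- \<rho> * cosh u)) integrable_on {0..}"
proof (rule measurable_bounded_by_integrable_imp_integrable_real)
  show "(\<lambda>u::real. cosh u ^ j * exp (- \<rho> * cosh u)) \<in> borel_measurable (lebesgue_on {0..})"
    by (intro continuous_imp_measurable_on_sets_lebesgue continuous_intros) auto
  show "(\<lambda>u. fact j * (2/\<rho>)^j * exp (- (\<rho>/4) * u)) integrable_on {0::real..}"
    using integrable_cmul[OF integrable_on_exp_minus_to_infinity[of "\<rho>/4" 0], of "fact j * (2/\<rho>)^j"] assms
    by simp
  show "\<bar>cosh u ^ j * exp (- \<rho> * cosh u)\<bar> \<le> fact j * (2/\<rho>)^j * exp (- (\<rho>/4) * u)" if "u \<in> {0..}" for u :: real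
    using kern_bound[OF assms, of u j] that by simp
qed auto

lemma Kf_deriv:
  assumes r: "0 < r"
  shows "(Kf j has_real_derivative - Kf (Suc j) r) (at r)"
proof -
  define F where "F y u = cosh u ^ j * exp (- y * cosh u)" for y u :: real
  define M where "M = Kf (Suc (Suc j)) (r/2) / 2"
  have intF: "\<And>y. 0 < y \<Longrightarrow> F y integrable_on {0..}" unfolding F_def using kern_integrable by blast
  have int1: "(\<lambda>u::real. cosh u ^ Suc j * exp (- r * cosh u)) integrable_on {0..}"
    using kern_integrable r by blast
  have int2: "(\<lambda>u::real. cosh u ^ Suc (Suc j) * exp (- (r/2) * cosh u)) integrable_on {0..}"
    using r by (intro kern_integrable) simp
  have key: "\<bar>(Kf j y - Kf j r)/(y - r) - (- Kf (Suc j) r)\<bar> \<le> M * \<bar>y - r\<bar>"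
    if y: "\<bar>y - r\<bar> < r/2" "y \<noteq> r" for y
  proof -
    define h where "h = y - r"
    have hne: "h \<noteq> 0" using y h_def by simp
    have ypos: "0 < y" using y(1) r abs_ge_minus_self[of "y-r"] by linarith
    define G where "G u = inverse h * (F y u - F r u) + cosh u ^ Suc j * exp (- r * cosh u)" for u
    have i3: "(\<lambda>u. F y u - F r u) integrable_on {0..}" by (rule integrable_diff[OF intF[OF ypos] intF[OF r]])
    have i4: "(\<lambda>u. inverse h * (F y u - F r u)) integrable_on {0..}"
      using integrable_cmul[OF i3, of "inverse h"] by simp
    have Gint: "G integrable_on {0..}" unfolding G_def by (rule integrable_add[OF i4 int1])
    have e1: "integral {0..} G = integral {0..} (\<lambda>u. inverse h * (F y u - F r u)) + integral {0..} (\<lambda>u. cosh u ^ Suc j * exp (- r * cosh u))"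
      unfolding G_def by (rule integral_add[OF i4 int1])
    have e2: "integral {0..} (\<lambda>u. inverse h * (F y u - F r u)) = inverse h * integral {0..} (\<lambda>u. F y u - F r u)"
      by (rule integral_mult[OF i3, symmetric])
    have e3: "integral {0..} (\<lambda>u. F y u - F r u) = integral {0..} (F y) - integral {0..} (F r)"
      by (rule integral_diff[OF intF[OF ypos] intF[OF r]])
    have e4: "integral {0..} (\<lambda>u. cosh u ^ Suc j * exp (- r * cosh u)) = Kf (Suc j) r"
      by (simp only: Kf_def)
    have a: "integral {0..} (F y) = Kf j y" "integral {0..} (F r) = Kf j r" by (simp_all add: Kf_def F_def[abs_def])
    have "integral {0..} G = inverse h * (Kf j y - Kf j r) + Kf (Suc j) r"
      unfolding e1 e2 e3 e4 a ..
    also have "\<dots> = (Kf j y - Kf j r)/(y - r) - (- Kf (Suc j) r)"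
      using y(2) unfolding h_def by (simp add: field_simps)
    finally have Gval: "integral {0..} G = (Kf j y - Kf j r)/(y - r) - (- Kf (Suc j) r)" .
    have Gb: "norm (G u) \<le> \<bar>h\<bar> / 2 * (cosh u ^ Suc (Suc j) * exp (- (r/2) * cosh u))"
      if u: "u \<in> {0..}" for u
    proof -
      define c where "c = cosh u"
      have cpos: "0 < c" unfolding c_def by simp
      have ey: "exp (- y * c) = exp (- r * c) * exp (- h * c)"
      proof -
        have "- y * c = - r * c + - h * c" by (simp add: h_def algebra_simps)
        then show ?thesis by (metis exp_add)
      qed
      have Geq: "G u = c ^ j * exp (- r * c) * ((exp (- h * c) - 1 - (- h * c)) / h)"
        unfolding G_def F_def c_def[symmetric] ey using hne by (simp add: field_simps)
      have t: "\<bar>exp (- h * c) - 1 - (- h * c)\<bar> \<le> exp (\<bar>h\<bar> * c) * (h^2 * c^2) / 2"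
        using taylor2_exp[of "- h * c"] cpos by (simp add: abs_mult power_mult_distrib)
      have "norm (G u) = c ^ j * exp (- r * c) * (\<bar>exp (- h * c) - 1 - (- h * c)\<bar> / \<bar>h\<bar>)"
        using cpos by (simp add: Geq abs_mult)
      also have "\<dots> \<le> c ^ j * exp (- r * c) * ((exp (\<bar>h\<bar> * c) * (h^2 * c^2) / 2) / \<bar>h\<bar>)"
        using cpos hne t by (intro mult_left_mono divide_right_mono) auto
      also have "\<dots> = \<bar>h\<bar> / 2 * (c ^ Suc (Suc j) * (exp (- r * c) * exp (\<bar>h\<bar> * c)))"
        using hne by (simp add: field_simps power2_eq_square abs_mult_self_eq)
      also have "\<dots> \<le> \<bar>h\<bar> / 2 * (c ^ Suc (Suc j) * exp (- (r/2) * c))"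
      proof -
        have "exp (- r * c) * exp (\<bar>h\<bar> * c) = exp (- r * c + \<bar>h\<bar> * c)" by (rule exp_add[symmetric])
        also have "\<dots> \<le> exp (- (r/2) * c)"
        proof -
          have "\<bar>h\<bar> * c \<le> r/2 * c" using y(1) cpos unfolding h_def by (intro mult_right_mono) auto
          then show ?thesis by simp
        qed
        finally show ?thesis using cpos by (intro mult_left_mono) auto
      qed
      finally show ?thesis unfolding c_def .
    qed
    have "norm (integral {0..} G) \<le> integral {0..} (\<lambda>u. \<bar>h\<bar> / 2 * (cosh u ^ Suc (Suc j) * exp (- (r/2) * cosh u)))"
      by (rule integral_norm_bound_integral[OF Gint _ Gb]) (use integrable_cmul[OF int2, of "\<bar>h\<bar>/2"] in simp)
    also have "\<dots> = M * \<bar>y - r\<bar>" by (simp add: M_def Kf_def h_def)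
    finally show ?thesis using Gval by simp
  qed
  have ev: "eventually (\<lambda>y. norm ((Kf j y - Kf j r)/(y - r) - (- Kf (Suc j) r)) \<le> M * \<bar>y - r\<bar>) (at r)"
  proof -
    have *: "norm ((Kf j y - Kf j r)/(y - r) - (- Kf (Suc j) r)) \<le> M * \<bar>y - r\<bar>"
      if "y \<noteq> r" "dist y r < r/2" for y
    proof -
      have "\<bar>y - r\<bar> < r/2" using that by (simp add: dist_real_def)
      from key[OF this that(1)] show ?thesis by simp
    qed
    show ?thesis unfolding eventually_at using r * by (intro exI[of _ "r/2"]) auto
  qed
  have lim0: "((\<lambda>y. M * \<bar>y - r\<bar>) \<longlongrightarrow> 0) (at r)"
  proof -
    have "((\<lambda>y. M * \<bar>y - r\<bar>) \<longlongrightarrow> M * \<bar>r - r\<bar>) (at r)" by (intro tendsto_intros)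
    then show ?thesis by simp
  qed
  have "((\<lambda>y. (Kf j y - Kf j r)/(y - r)) \<longlongrightarrow> - Kf (Suc j) r) (at r)"
    by (rule LIM_zero_cancel, rule Lim_null_comparison[OF ev lim0])
  then show ?thesis by (simp add: has_field_derivative_iff)
qed

lemma besselK0_Kf: "besselK0 = Kf 0"
  by (rule ext) (simp add: besselK0_def Kf_def)

lemma Kf_cont: "0 < r \<Longrightarrow> isCont (Kf j) r"
  using Kf_deriv DERIV_isCont by blast

lemma Kf_continuous_on: "continuous_on {0<..} (Kf j)"
  by (intro continuous_at_imp_continuous_on ballI Kf_cont) auto

lemma deriv_iter_Kf: "0 < x \<Longrightarrow> (deriv ^^ n) (Kf 0) x = (-1)^n * Kf n x"
proof (induction n arbitrary: x)
  case 0 then show ?case by simp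
next
  case (Suc n)
  have ev: "eventually (\<lambda>y. (deriv ^^ n) (Kf 0) y = (-1)^n * Kf n y) (nhds x)"
    unfolding eventually_nhds using Suc.prems
    by (intro exI[of _ "{0<..}"]) (auto intro: Suc.IH)
  have "((\<lambda>y. (-1)^n * Kf n y) has_real_derivative (-1)^n * (- Kf (Suc n) x)) (at x)"
    by (intro DERIV_cmult Kf_deriv Suc.prems)
  then have "((deriv ^^ n) (Kf 0) has_real_derivative (-1)^n * (- Kf (Suc n) x)) (at x)"
    using DERIV_cong_ev[OF refl ev refl] by blast
  then show ?case by (simp add: DERIV_imp_deriv)
qed

lemma K0_third: "0 < r \<Longrightarrow> (deriv ^^ 3) besselK0 r = - Kf 3 r"
  using deriv_iter_Kf[of r 3] by (simp add: besselK0_Kf)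

lemma Kf_integrable: "0 < r \<Longrightarrow> (\<lambda>u::real. cosh u ^ j * exp (- r * cosh u)) integrable_on {0..}"
  by (rule kern_integrable)

lemma Kf_antimono:
  assumes "0 < a" "a \<le> b" shows "Kf j b \<le> Kf j a"
  unfolding Kf_def
proof (rule integral_le)
  show "(\<lambda>u::real. cosh u ^ j * exp (- b * cosh u)) integrable_on {0..}" using assms by (intro kern_integrable) auto
  show "(\<lambda>u::real. cosh u ^ j * exp (- a * cosh u)) integrable_on {0..}" using assms by (intro kern_integrable) auto
  show "cosh u ^ j * exp (- b * cosh u) \<le> cosh u ^ j * exp (- a * cosh u)" if "u \<in> {0..}" for u :: real
    using assms by (intro mult_left_mono) (auto intro: mult_right_mono)
qed

lemma Kf_pos:
  assumes r: "0 < r" shows "0 < Kf j r"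
proof -
  let ?f = "\<lambda>u::real. cosh u ^ j * exp (- r * cosh u)"
  have c: "continuous_on {0..1} ?f" by (intro continuous_intros)
  have "exp (- r * cosh 1) = integral {0..1::real} (\<lambda>u. exp (- r * cosh 1))" by simp
  also have "\<dots> \<le> integral {0..1} ?f"
  proof (rule integral_le)
    show "(\<lambda>u. exp (- r * cosh 1)) integrable_on {0..1::real}" by (rule integrable_const_ivl)
    show "?f integrable_on {0..1}" by (rule integrable_continuous_interval[OF c])
    show "exp (- r * cosh 1) \<le> ?f u" if "u \<in> {0..1}" for u
    proof -
      have "cosh u \<le> cosh 1" using that by (subst cosh_real_nonneg_le_iff) auto
      then have "exp (- r * cosh 1) \<le> exp (- r * cosh u)" using r by simp
      moreover have "1 \<le> cosh u ^ j" using cosh_real_ge_1 by (simp add: one_le_power)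
      ultimately have "exp (- r * cosh 1) \<le> 1 * exp (- r * cosh u)" by simp
      also have "\<dots> \<le> cosh u ^ j * exp (- r * cosh u)"
        by (rule mult_right_mono[OF \<open>1 \<le> cosh u ^ j\<close>]) simp
      finally show ?thesis .
    qed
  qed
  also have "\<dots> \<le> integral {0..} ?f"
    by (rule integral_subset_le) (use integrable_continuous_interval[OF c] kern_integrable[OF r] in auto)
  finally show ?thesis unfolding Kf_def using exp_gt_zero[of "- r * cosh 1"] by linarith
qed

lemma Kf_tail:
  assumes "0 < s0" "s0 \<le> \<rho>" shows "Kf j \<rho> \<le> exp (- \<rho> / 2) * Kf j (s0/2)"
proof -
  have "Kf j \<rho> \<le> integral {0..} (\<lambda>u::real. exp (- \<rho> / 2) * (cosh u ^ j * exp (- (s0/2) * cosh u)))"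
    unfolding Kf_def
  proof (rule integral_le)
    show "(\<lambda>u::real. cosh u ^ j * exp (- \<rho> * cosh u)) integrable_on {0..}" using assms by (intro kern_integrable) auto
    show "(\<lambda>u::real. exp (- \<rho> / 2) * (cosh u ^ j * exp (- (s0/2) * cosh u))) integrable_on {0..}"
      using integrable_cmul[OF kern_integrable[of "s0/2" j], of "exp (- \<rho> / 2)"] assms by simp
    show "cosh u ^ j * exp (- \<rho> * cosh u) \<le> exp (- \<rho> / 2) * (cosh u ^ j * exp (- (s0/2) * cosh u))"
      if "u \<in> {0..}" for u :: real
    proof -
      have c1: "1 \<le> cosh u" by (rule cosh_real_ge_1)
      have "\<rho> / 2 + s0 / 2 * cosh u \<le> \<rho> / 2 * cosh u + \<rho> / 2 * cosh u"
        using c1 assms by (intro add_mono) (auto intro: mult_right_mono mult_left_mono)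
      then have "- \<rho> * cosh u \<le> - \<rho> / 2 + - (s0/2) * cosh u" by (simp add: algebra_simps)
      then have "exp (- \<rho> * cosh u) \<le> exp (- \<rho> / 2) * exp (- (s0/2) * cosh u)"
        by (simp add: exp_add[symmetric])
      then have "cosh u ^ j * exp (- \<rho> * cosh u) \<le> cosh u ^ j * (exp (- \<rho> / 2) * exp (- (s0/2) * cosh u))"
        by (rule mult_left_mono) simp
      then show ?thesis by (simp only: mult_ac)
    qed
  qed
  also have "\<dots> = exp (- \<rho> / 2) * Kf j (s0/2)"
    unfolding Kf_def by (rule integral_mult[symmetric]) (use assms kern_integrable[of "s0/2" j] in simp)
  finally show ?thesis .
qed

definition Qf :: "real \<Rightarrow> real" where
  "Qf s = integral {0<..} (\<lambda>w. Kf 3 (sqrt (s\<^sup>2 + w\<^sup>2)))"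

lemma sq_add_pos[simp]: "0 < (s::real) \<Longrightarrow> 0 < s\<^sup>2 + w\<^sup>2"
  using add_pos_nonneg[of "s\<^sup>2" "w\<^sup>2"] by simp

lemma sq_add_pos4[simp]: "0 < (s::real) \<Longrightarrow> 0 < s\<^sup>2 + 4"
  using add_pos_pos[of "s\<^sup>2" 4] by simp

lemma sqrt_ge_s: "0 \<le> s \<Longrightarrow> s \<le> sqrt (s\<^sup>2 + w\<^sup>2)"
  by (rule real_le_rsqrt) simp

lemma sqrt_ge_w: "0 \<le> w \<Longrightarrow> w \<le> sqrt (s\<^sup>2 + w\<^sup>2)"
  by (rule real_le_rsqrt) simp

lemma Q_bound:
  assumes "0 < s0" "s0 \<le> s" "0 \<le> w"
  shows "\<bar>Kf 3 (sqrt (s\<^sup>2 + w\<^sup>2))\<bar> \<le> Kf 3 (s0/2) * exp (- (1/2) * w)"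
proof -
  let ?r = "sqrt (s\<^sup>2 + w\<^sup>2)"
  have r1: "s0 \<le> ?r" using sqrt_ge_s[of s w] assms by linarith
  have r2: "w \<le> ?r" using sqrt_ge_w[of w s] assms by linarith
  have "\<bar>Kf 3 ?r\<bar> = Kf 3 ?r" using Kf_pos[of ?r 3] r1 assms by simp
  also have "\<dots> \<le> exp (- ?r / 2) * Kf 3 (s0/2)" by (rule Kf_tail[OF assms(1) r1])
  also have "\<dots> \<le> exp (- (1/2) * w) * Kf 3 (s0/2)"
    using r2 Kf_pos[of "s0/2" 3] assms by (intro mult_right_mono) auto
  finally show ?thesis by (simp add: mult.commute)
qed

lemma exp_half_integrable: "(\<lambda>w::real. c * exp (- (1/2) * w)) integrable_on {0<..}"
proof (rule integrable_spike_set)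
  show "(\<lambda>w::real. c * exp (- (1/2) * w)) integrable_on {0..}"
    using integrable_cmul[OF integrable_on_exp_minus_to_infinity[of "1/2" 0], of c] by simp
  show "negligible {x \<in> {0::real..} - {0<..}. c * exp (- (1/2) * x) \<noteq> 0}"
    by (rule negligible_subset[of "{0}"]) auto
  show "negligible {x \<in> {0<..} - {0::real..}. c * exp (- (1/2) * x) \<noteq> 0}"
    by (rule negligible_subset[of "{}"]) auto
qed

lemma Q_cont_inner: assumes "0 < s" shows "continuous_on {0<..} (\<lambda>w. Kf 3 (sqrt (s\<^sup>2 + w\<^sup>2)))"
proof (rule continuous_on_compose2[OF Kf_continuous_on])
  show "continuous_on {0<..} (\<lambda>w. sqrt (s\<^sup>2 + w\<^sup>2))" by (intro continuous_intros)
  show "(\<lambda>w. sqrt (s\<^sup>2 + w\<^sup>2)) ` {0<..} \<subseteq> {0<..}" using assms by auto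
qed

lemma cancel_aux: fixes w R K :: real assumes "0 < w" "0 < R" shows "\<bar>w / R\<bar> * (K * R / w) = K"
  using assms by (simp add: field_simps)

lemma Q_integrable:
  assumes "0 < s" shows "(\<lambda>w. Kf 3 (sqrt (s\<^sup>2 + w\<^sup>2))) integrable_on {0<..}"
proof (rule measurable_bounded_by_integrable_imp_integrable_real)
  show "(\<lambda>w. Kf 3 (sqrt (s\<^sup>2 + w\<^sup>2))) \<in> borel_measurable (lebesgue_on {0<..})"
    by (rule continuous_imp_measurable_on_sets_lebesgue[OF Q_cont_inner[OF assms]]) simp
  show "(\<lambda>w::real. Kf 3 (s/2) * exp (- (1/2) * w)) integrable_on {0<..}" by (rule exp_half_integrable)
  show "\<bar>Kf 3 (sqrt (s\<^sup>2 + w\<^sup>2))\<bar> \<le> Kf 3 (s/2) * exp (- (1/2) * w)" if "w \<in> {0<..}" for w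
    using Q_bound[of s s w] assms that by auto
qed simp

lemma Qf_pos: assumes "0 < s" shows "0 < Qf s"
proof -
  let ?f = "\<lambda>w. Kf 3 (sqrt (s\<^sup>2 + w\<^sup>2))"
  let ?c = "Kf 3 (sqrt (s\<^sup>2 + 4))"
  have cc: "continuous_on {1..2} ?f"
    by (rule continuous_on_subset[OF Q_cont_inner[OF assms]]) auto
  have cpos: "0 < ?c" using assms by (intro Kf_pos) simp
  have "?c = integral {1..2::real} (\<lambda>w. ?c)" by simp
  also have "\<dots> \<le> integral {1..2} ?f"
  proof (rule integral_le)
    show "(\<lambda>w. ?c) integrable_on {1..2::real}" by (rule integrable_const_ivl)
    show "?f integrable_on {1..2}" by (rule integrable_continuous_interval[OF cc])
    show "?c \<le> ?f w" if "w \<in> {1..2}" for w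
    proof (rule Kf_antimono)
      show "0 < sqrt (s\<^sup>2 + w\<^sup>2)" using assms by simp
      have "w\<^sup>2 \<le> 2\<^sup>2" using that by (intro power_mono) auto
      then have "w\<^sup>2 \<le> 4" by simp
      then show "sqrt (s\<^sup>2 + w\<^sup>2) \<le> sqrt (s\<^sup>2 + 4)" by simp
    qed
  qed
  also have "\<dots> \<le> integral {0<..} ?f"
  proof (rule integral_subset_le)
    show "{1..2} \<subseteq> {0::real<..}" by auto
    show "?f integrable_on {1..2}" by (rule integrable_continuous_interval[OF cc])
    show "?f integrable_on {0<..}" by (rule Q_integrable[OF assms])
    show "\<forall>x\<in>{0<..}. 0 \<le> ?f x" using Kf_pos[of "sqrt (s\<^sup>2 + x\<^sup>2)" 3 for x] assms by (simp add: less_imp_le)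
  qed
  finally show ?thesis unfolding Qf_def using cpos by linarith
qed

lemma lebesgue_Ioi: "{(a::real)<..} \<in> sets lebesgue"
  by simp

lemma gfun_eq:
  assumes s: "0 < s" shows "gfun s = s / (4 * pi) * Qf s"
proof -
  let ?g = "\<lambda>w. sqrt (s\<^sup>2 + w\<^sup>2)"
  let ?g' = "\<lambda>w. w / sqrt (s\<^sup>2 + w\<^sup>2)"
  let ?f = "\<lambda>r. Kf 3 r * r / sqrt (r\<^sup>2 - s\<^sup>2)"
  have 1: "integral {s<..} (\<lambda>r. (deriv ^^ 3) besselK0 r * r / sqrt (r\<^sup>2 - s\<^sup>2)) = - integral {s<..} ?f"
  proof -
    have "integral {s<..} (\<lambda>r. (deriv ^^ 3) besselK0 r * r / sqrt (r\<^sup>2 - s\<^sup>2)) = integral {s<..} (\<lambda>r. - ?f r)"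
    proof (rule integral_cong)
      fix r assume "r \<in> {s<..}"
      then have "0 < r" using s by simp
      then show "(deriv ^^ 3) besselK0 r * r / sqrt (r\<^sup>2 - s\<^sup>2) = - ?f r" by (simp add: K0_third)
    qed
    then show ?thesis by (simp only: integral_neg)
  qed
  have der: "(?g has_field_derivative ?g' w) (at w within {0<..})" if "w \<in> {0<..}" for w
  proof -
    have p: "0 < s\<^sup>2 + w\<^sup>2" using s by (simp add: add_pos_nonneg)
    have d1: "((\<lambda>w. s\<^sup>2 + w\<^sup>2) has_real_derivative 2 * w) (at w)"
      using DERIV_add[OF DERIV_const[of "s\<^sup>2"] DERIV_pow[of 2 w]] by simp
    have "(?g has_real_derivative inverse (sqrt (s\<^sup>2 + w\<^sup>2)) / 2 * (2 * w)) (at w)"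
      by (rule DERIV_chain2[OF DERIV_real_sqrt[OF p] d1])
    moreover have "inverse (sqrt (s\<^sup>2 + w\<^sup>2)) / 2 * (2 * w) = ?g' w" by (simp add: field_simps)
    ultimately show ?thesis by (simp add: has_field_derivative_at_within)
  qed
  have inj: "inj_on ?g {0<..}"
  proof (rule inj_onI)
    fix x y assume x: "x \<in> {0::real<..}" and y: "y \<in> {0::real<..}" and e: "?g x = ?g y"
    from e have "s\<^sup>2 + x\<^sup>2 = s\<^sup>2 + y\<^sup>2" by simp
    then have "x\<^sup>2 = y\<^sup>2" by simp
    then show "x = y" using x y by (simp add: power2_eq_iff_nonneg)
  qed
  have img: "?g ` {0<..} = {s<..}"
  proof
    show "?g ` {0<..} \<subseteq> {s<..}"
    proof
      fix r assume "r \<in> ?g ` {0<..}"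
      then obtain w where w: "0 < w" "r = ?g w" by auto
      have "sqrt (s\<^sup>2) < sqrt (s\<^sup>2 + w\<^sup>2)" using w by (intro real_sqrt_less_mono) simp
      then show "r \<in> {s<..}" using w s by simp
    qed
    show "{s<..} \<subseteq> ?g ` {0<..}"
    proof
      fix r assume r: "r \<in> {s<..}"
      then have rs: "s < r" by simp
      have "s\<^sup>2 < r\<^sup>2" using rs s by (simp add: power_strict_mono)
      then have pos: "0 < r\<^sup>2 - s\<^sup>2" by simp
      have "?g (sqrt (r\<^sup>2 - s\<^sup>2)) = r"
        using pos rs s by (simp add: real_sqrt_pow2)
      then have rr: "r = ?g (sqrt (r\<^sup>2 - s\<^sup>2))" by simp
      have sq: "sqrt (r\<^sup>2 - s\<^sup>2) \<in> {0<..}" using pos by simp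
      show "r \<in> ?g ` {0<..}" by (rule image_eqI[where f="?g", OF rr sq])
    qed
  qed
  have eqS: "\<bar>?g' w\<bar> * ?f (?g w) = Kf 3 (sqrt (s\<^sup>2 + w\<^sup>2))" if "w \<in> {0<..}" for w
  proof -
    have w: "0 < w" using that by simp
    have R: "0 < sqrt (s\<^sup>2 + w\<^sup>2)" using s by simp
    have "(sqrt (s\<^sup>2 + w\<^sup>2))\<^sup>2 - s\<^sup>2 = w\<^sup>2" by (simp add: add_nonneg_nonneg)
    then have "sqrt ((sqrt (s\<^sup>2 + w\<^sup>2))\<^sup>2 - s\<^sup>2) = w" using w by simp
    then have "\<bar>?g' w\<bar> * ?f (?g w) = \<bar>w / sqrt (s\<^sup>2 + w\<^sup>2)\<bar> * (Kf 3 (sqrt (s\<^sup>2 + w\<^sup>2)) * sqrt (s\<^sup>2 + w\<^sup>2) / w)"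
      by (simp only:)
    also have "\<dots> = Kf 3 (sqrt (s\<^sup>2 + w\<^sup>2))" by (rule cancel_aux[OF w R])
    finally show ?thesis .
  qed
  have intL: "(\<lambda>w. \<bar>?g' w\<bar> * ?f (?g w)) integrable_on {0<..}"
  proof -
    have "(\<lambda>w. \<bar>?g' w\<bar> * ?f (?g w)) integrable_on {0<..} \<longleftrightarrow> (\<lambda>w. Kf 3 (sqrt (s\<^sup>2 + w\<^sup>2))) integrable_on {0<..}"
      by (rule integrable_cong) (rule eqS)
    then show ?thesis using Q_integrable[OF s] by (simp only:)
  qed
  have absL: "(\<lambda>w. \<bar>?g' w\<bar> * ?f (?g w)) absolutely_integrable_on {0<..}"
  proof (rule nonnegative_absolutely_integrable_1[OF intL])
    fix w :: real assume w: "w \<in> {0<..}"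
    have "0 < Kf 3 (sqrt (s\<^sup>2 + w\<^sup>2))" using s by (intro Kf_pos) simp
    then show "0 \<le> \<bar>?g' w\<bar> * ?f (?g w)" using eqS[OF w] by simp
  qed
  have intval: "integral {0<..} (\<lambda>w. \<bar>?g' w\<bar> * ?f (?g w)) = Qf s"
    unfolding Qf_def by (rule integral_cong) (rule eqS)
  have "?f absolutely_integrable_on (?g ` {0<..}) \<and> integral (?g ` {0<..}) ?f = Qf s"
  proof -
    have cov: "((\<lambda>w. \<bar>?g' w\<bar> * ?f (?g w)) absolutely_integrable_on {0<..} \<and> integral {0<..} (\<lambda>w. \<bar>?g' w\<bar> * ?f (?g w)) = Qf s)
        \<longleftrightarrow> (?f absolutely_integrable_on (?g ` {0<..}) \<and> integral (?g ` {0<..}) ?f = Qf s)"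
      by (rule has_absolute_integral_change_of_variables_1'[OF lebesgue_Ioi _ inj]) (erule der)
    show ?thesis by (rule cov[THEN iffD1, OF conjI[OF absL intval]])
  qed
  then have "integral {s<..} ?f = Qf s" using img by simp
  then show ?thesis unfolding gfun_def 1 by simp
qed

lemma Qf_continuous_on:
  assumes a: "0 < a" shows "continuous_on {a..b} Qf"
proof (rule continuous_on_sequentiallyI)
  fix u :: "nat \<Rightarrow> real" and x assume u: "\<forall>n. u n \<in> {a..b}" and x: "x \<in> {a..b}" and lim: "u \<longlonglongrightarrow> x"
  have xpos: "0 < x" using x a by simp
  have upos: "0 < u n" for n using u a by (meson atLeastAtMost_iff less_le_trans)
  have "(\<lambda>k. integral {0<..} (\<lambda>w. Kf 3 (sqrt ((u k)\<^sup>2 + w\<^sup>2)))) \<longlonglongrightarrow> integral {0<..} (\<lambda>w. Kf 3 (sqrt (x\<^sup>2 + w\<^sup>2)))"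
  proof (rule dominated_convergence(2))
    show "(\<lambda>w. Kf 3 (sqrt ((u k)\<^sup>2 + w\<^sup>2))) integrable_on {0<..}" for k by (rule Q_integrable[OF upos])
    show "(\<lambda>w::real. Kf 3 (a/2) * exp (- (1/2) * w)) integrable_on {0<..}" by (rule exp_half_integrable)
    show "norm (Kf 3 (sqrt ((u k)\<^sup>2 + w\<^sup>2))) \<le> Kf 3 (a/2) * exp (- (1/2) * w)" if "w \<in> {0<..}" for k w
      using Q_bound[of a "u k" w] a u that by auto
    show "(\<lambda>k. Kf 3 (sqrt ((u k)\<^sup>2 + w\<^sup>2))) \<longlonglongrightarrow> Kf 3 (sqrt (x\<^sup>2 + w\<^sup>2))" if "w \<in> {0<..}" for w
    proof (rule isCont_tendsto_compose[OF Kf_cont])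
      show "0 < sqrt (x\<^sup>2 + w\<^sup>2)" using xpos by (simp add: add_pos_nonneg)
      show "(\<lambda>k. sqrt ((u k)\<^sup>2 + w\<^sup>2)) \<longlonglongrightarrow> sqrt (x\<^sup>2 + w\<^sup>2)" by (intro tendsto_intros lim)
    qed
  qed
  then show "(\<lambda>n. Qf (u n)) \<longlonglongrightarrow> Qf x" unfolding Qf_def .
qed

lemma gfun_pos: assumes s: "0 < s" shows "0 < gfun s"
proof -
  have "gfun s = s / (4 * pi) * Qf s" by (rule gfun_eq[OF s])
  moreover have "0 < Qf s" by (rule Qf_pos[OF s])
  moreover have "0 < s / (4 * pi)" using s pi_gt_zero by simp
  ultimately show ?thesis by (metis mult_pos_pos)
qed

lemma gfun_continuous_on:
  assumes a: "0 < a" shows "continuous_on {a..b} gfun"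
proof -
  have "continuous_on {a..b} (\<lambda>s. s / (4 * pi) * Qf s)"
    by (intro continuous_intros Qf_continuous_on a) (use pi_gt_zero in auto)
  moreover have "\<And>s. s \<in> {a..b} \<Longrightarrow> s / (4 * pi) * Qf s = gfun s"
  proof -
    fix s assume "s \<in> {a..b}"
    then have "0 < s" using a by simp
    then show "s / (4 * pi) * Qf s = gfun s" by (rule gfun_eq[symmetric])
  qed
  ultimately show ?thesis by (rule continuous_on_eq)
qed

fun aa :: "nat \<Rightarrow> real" where
  "aa 0 = 1"
| "aa (Suc m) = (real m + 2) / (2 * (real m + 1)) * (\<Sum>i\<le>m. aa i * aa (m - i))"

lemma aa_nonneg: "0 \<le> aa n"
proof (induction n rule: less_induct)
  case (less n)
  show ?case
  proof (cases n)
    case 0 then show ?thesis by simp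
  next
    case (Suc m)
    have "0 \<le> (\<Sum>i\<le>m. aa i * aa (m - i))"
      using less Suc by (intro sum_nonneg mult_nonneg_nonneg) auto
    then show ?thesis using Suc by simp
  qed
qed

lemma aa_rec: "(real m + 1) * aa (Suc m) = (real m + 2) / 2 * (\<Sum>i\<le>m. aa i * aa (m - i))"
  by (simp add: field_simps)

definition Pn :: "nat \<Rightarrow> real \<Rightarrow> real" where
  "Pn N x = (\<Sum>i<N. aa i * x ^ i)"

definition Pd :: "nat \<Rightarrow> real \<Rightarrow> real" where
  "Pd N x = (\<Sum>i<N. aa i * (real i * x ^ (i - Suc 0)))"

lemma Pn_deriv: "(Pn N has_real_derivative Pd N x) (at x)"
  unfolding Pn_def[abs_def] Pd_def
  by (intro DERIV_sum DERIV_cmult DERIV_pow)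

lemma Pn_cont: "continuous_on S (Pn N)"
  unfolding Pn_def[abs_def] by (intro continuous_intros)

lemma x_Pd: "x * Pd N x = (\<Sum>j<N. real j * aa j * x ^ j)"
  unfolding Pd_def sum_distrib_left
proof (rule sum.cong[OF refl])
  fix j assume "j \<in> {..<N}"
  show "x * (aa j * (real j * x ^ (j - Suc 0))) = real j * aa j * x ^ j"
  proof (cases j)
    case 0 then show ?thesis by simp
  next
    case (Suc l) then show ?thesis by (simp add: algebra_simps)
  qed
qed

lemma Pd_shift: "Pd N x = (\<Sum>k<N - 1. (real k + 1) * aa (Suc k) * x ^ k)"
proof (cases N)
  case 0 then show ?thesis by (simp add: Pd_def)
next
  case (Suc n)
  show ?thesis unfolding Pd_def Suc sum.lessThan_Suc_shift
    by (simp add: algebra_simps)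
qed

lemma key_poly:
  assumes x: "0 \<le> x"
  shows "Pd N x \<le> (Pn N x)\<^sup>2 + x * Pn N x * Pd N x"
proof -
  define F where "F i j = aa i * aa j * x ^ (i + j)" for i j
  have Fnn: "0 \<le> F i j" for i j unfolding F_def using x aa_nonneg by simp
  have Fsym: "F i j = F j i" for i j unfolding F_def by (simp add: ac_simps)
  have R1: "(Pn N x)\<^sup>2 + x * Pn N x * Pd N x = (\<Sum>i<N. \<Sum>j<N. (1 + real j) * F i j)"
  proof -
    have "(Pn N x)\<^sup>2 = (\<Sum>i<N. \<Sum>j<N. F i j)"
      unfolding power2_eq_square Pn_def sum_product F_def by (simp add: power_add ac_simps)
    moreover have "x * Pn N x * Pd N x = (\<Sum>i<N. \<Sum>j<N. real j * F i j)"
    proof -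
      have "x * Pn N x * Pd N x = Pn N x * (x * Pd N x)" by simp
      also have "\<dots> = (\<Sum>i<N. \<Sum>j<N. real j * F i j)"
        unfolding x_Pd Pn_def sum_product F_def by (simp add: power_add ac_simps)
      finally show ?thesis .
    qed
    ultimately show ?thesis by (simp add: sum.distrib[symmetric] algebra_simps)
  qed
  define g where "g i j = (real i + real j + 2) / 2 * F i j" for i j
  have gnn: "0 \<le> g i j" for i j unfolding g_def using Fnn[of i j] by simp
  have R2: "(\<Sum>i<N. \<Sum>j<N. (1 + real j) * F i j) = (\<Sum>i<N. \<Sum>j<N. g i j)"
  proof -
    have sw: "(\<Sum>i<N. \<Sum>j<N. (1 + real j) * F i j) = (\<Sum>i<N. \<Sum>j<N. (1 + real i) * F i j)"
      by (subst sum.swap) (simp add: Fsym)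
    have "2 * (\<Sum>i<N. \<Sum>j<N. (1 + real j) * F i j)
        = (\<Sum>i<N. \<Sum>j<N. (1 + real j) * F i j) + (\<Sum>i<N. \<Sum>j<N. (1 + real i) * F i j)"
      using sw by simp
    also have "\<dots> = (\<Sum>i<N. \<Sum>j<N. (1 + real j) * F i j + (1 + real i) * F i j)"
      by (simp add: sum.distrib)
    also have "\<dots> = (\<Sum>i<N. \<Sum>j<N. 2 * g i j)"
      unfolding g_def by (intro sum.cong refl) (simp add: field_simps)
    also have "\<dots> = 2 * (\<Sum>i<N. \<Sum>j<N. g i j)" by (simp add: sum_distrib_left)
    finally show ?thesis by simp
  qed
  have R3: "(\<Sum>k<N - 1. \<Sum>i\<le>k. g i (k - i)) \<le> (\<Sum>i<N. \<Sum>j<N. g i j)"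
  proof -
    have "(\<Sum>k<N - 1. \<Sum>i\<le>k. g i (k - i)) = (\<Sum>(i,j)\<in>{(i,j). i + j < N - 1}. g i j)"
      by (rule sum.triangle_reindex[symmetric])
    also have "\<dots> \<le> (\<Sum>(i,j)\<in>{..<N} \<times> {..<N}. g i j)"
      by (rule sum_mono2) (auto simp: gnn)
    also have "\<dots> = (\<Sum>i<N. \<Sum>j<N. g i j)" by (rule sum.cartesian_product[symmetric])
    finally show ?thesis .
  qed
  have R4: "(\<Sum>k<N - 1. \<Sum>i\<le>k. g i (k - i)) = Pd N x"
    unfolding Pd_shift
  proof (rule sum.cong[OF refl])
    fix k assume "k \<in> {..<N - 1}"
    have "(\<Sum>i\<le>k. g i (k - i)) = (\<Sum>i\<le>k. (real k + 2) / 2 * x ^ k * (aa i * aa (k - i)))"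
      unfolding g_def F_def by (rule sum.cong[OF refl]) (auto simp: of_nat_diff)
    also have "\<dots> = (real k + 2) / 2 * x ^ k * (\<Sum>i\<le>k. aa i * aa (k - i))"
      by (simp add: sum_distrib_left)
    also have "\<dots> = ((real k + 2) / 2 * (\<Sum>i\<le>k. aa i * aa (k - i))) * x ^ k"
      by (simp only: mult.commute mult.left_commute mult.assoc)
    also have "\<dots> = (real k + 1) * aa (Suc k) * x ^ k"
      by (simp only: aa_rec)
    finally show "(\<Sum>i\<le>k. g i (k - i)) = (real k + 1) * aa (Suc k) * x ^ k" .
  qed
  show ?thesis using R1 R2 R3 R4 by simp
qed

lemma Pn_zero: "Pn N 0 \<le> 1"
proof (cases N)
  case 0 then show ?thesis by (simp add: Pn_def)
next
  case (Suc n) then show ?thesis by (simp add: Pn_def sum.lessThan_Suc_shift)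
qed

lemma psi_le:
  assumes x: "0 \<le> x"
  shows "x * Pn N x * exp (- (x * Pn N x)) \<le> x"
proof -
  define \<psi> where "\<psi> y = Pn N y * exp (- (y * Pn N y))" for y
  have d: "(\<psi> has_real_derivative exp (- (y * Pn N y)) * (Pd N y - (Pn N y)\<^sup>2 - y * Pn N y * Pd N y)) (at y)" for y
  proof -
    have d1: "((\<lambda>y. - (y * Pn N y)) has_real_derivative - (1 * Pn N y + Pd N y * y)) (at y)"
      by (intro DERIV_minus DERIV_mult DERIV_ident Pn_deriv)
    have d2: "((\<lambda>y. exp (- (y * Pn N y))) has_real_derivative exp (- (y * Pn N y)) * (- (1 * Pn N y + Pd N y * y))) (at y)"
      by (rule DERIV_chain2[OF DERIV_exp d1])
    have d3: "(\<psi> has_real_derivative Pd N y * exp (- (y * Pn N y)) + exp (- (y * Pn N y)) * (- (1 * Pn N y + Pd N y * y)) * Pn N y) (at y)"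
      unfolding \<psi>_def[abs_def] by (rule DERIV_mult[OF Pn_deriv d2])
    show ?thesis by (rule DERIV_cong[OF d3]) (simp add: algebra_simps power2_eq_square)
  qed
  have "\<psi> x \<le> \<psi> 0"
  proof (rule DERIV_nonpos_imp_nonincreasing[OF x])
    fix y :: real assume "0 \<le> y" "y \<le> x"
    have "Pd N y - (Pn N y)\<^sup>2 - y * Pn N y * Pd N y \<le> 0" using key_poly[OF \<open>0 \<le> y\<close>, of N] by simp
    then have "exp (- (y * Pn N y)) * (Pd N y - (Pn N y)\<^sup>2 - y * Pn N y * Pd N y) \<le> 0"
      by (simp add: mult_nonneg_nonpos)
    then show "\<exists>d. (\<psi> has_real_derivative d) (at y) \<and> d \<le> 0" using d by blast
  qed
  also have "\<psi> 0 \<le> 1" unfolding \<psi>_def using Pn_zero by simp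
  finally have "\<psi> x \<le> 1" .
  then have "x * \<psi> x \<le> x * 1" using x by (intro mult_left_mono) auto
  then show ?thesis unfolding \<psi>_def by (simp add: mult.assoc)
qed

lemma T_lt1:
  assumes x: "0 \<le> x" "x < exp (-1)"
  shows "x * Pn N x < 1"
proof (rule ccontr)
  assume "\<not> x * Pn N x < 1"
  then have ge: "1 \<le> x * Pn N x" by simp
  have c: "continuous_on {0..x} (\<lambda>y. y * Pn N y)" by (intro continuous_intros Pn_cont)
  obtain x1 where x1: "0 \<le> x1" "x1 \<le> x" "x1 * Pn N x1 = 1"
    using IVT'[of "\<lambda>y. y * Pn N y" 0 1 x, OF _ ge x(1) c] by auto
  have "x1 * Pn N x1 * exp (- (x1 * Pn N x1)) \<le> x1" by (rule psi_le[OF x1(1)])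
  then have "exp (-1) \<le> x1" using x1(3) by simp
  then show False using x1(2) x(2) by simp
qed

lemma phi_strict:
  fixes u v :: real assumes "-1 \<le> u" "u < v" shows "u * exp u < v * exp v"
proof (rule DERIV_pos_imp_increasing_open[OF assms(2)])
  fix y :: real assume y: "u < y" "y < v"
  have "((\<lambda>y. y * exp y) has_real_derivative 1 * exp y + exp y * y) (at y)"
    by (intro DERIV_mult DERIV_ident DERIV_exp)
  moreover have "0 < 1 * exp y + exp y * y"
  proof -
    have "0 < 1 + y" using y assms by simp
    then have "0 < exp y * (1 + y)" by simp
    then show ?thesis by (simp add: algebra_simps)
  qed
  ultimately show "\<exists>d. ((\<lambda>y. y * exp y) has_real_derivative d) (at y) \<and> 0 < d" by blast
next
  show "continuous_on {u..v} (\<lambda>y. y * exp y)" by (intro continuous_intros)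
qed

lemma psi_strict:
  fixes u v :: real assumes "0 \<le> u" "u < v" "v \<le> 1" shows "u * exp (- u) < v * exp (- v)"
proof (rule DERIV_pos_imp_increasing_open[OF assms(2)])
  fix y :: real assume y: "u < y" "y < v"
  have "((\<lambda>y. y * exp (- y)) has_real_derivative 1 * exp (- y) + (exp (- y) * (- 1)) * y) (at y)"
    by (intro DERIV_mult DERIV_ident DERIV_chain2[OF DERIV_exp] DERIV_minus)
  moreover have "0 < 1 * exp (- y) + (exp (- y) * (- 1)) * y"
  proof -
    have "0 < 1 - y" using y assms by simp
    then have "0 < exp (- y) * (1 - y)" by simp
    then show ?thesis by (simp add: algebra_simps)
  qed
  ultimately show "\<exists>d. ((\<lambda>y. y * exp (- y)) has_real_derivative d) (at y) \<and> 0 < d" by blast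
next
  show "continuous_on {u..v} (\<lambda>y. y * exp (- y))" by (intro continuous_intros)
qed

lemma lambertW_eq:
  assumes "0 \<le> w" "w < 1" shows "lambertW (- (w * exp (- w))) = - w"
  unfolding lambertW_def
proof (rule the_equality)
  show "- 1 \<le> - w \<and> - w * exp (- w) = - (w * exp (- w))" using assms by simp
  fix v assume v: "- 1 \<le> v \<and> v * exp v = - (w * exp (- w))"
  show "v = - w"
  proof (rule ccontr)
    assume ne: "v \<noteq> - w"
    show False
    proof (cases "v < - w")
      case True
      from phi_strict[OF _ True] v have "v * exp v < - w * exp (- w)" by simp
      then show False using v by simp
    next
      case False
      then have "- w < v" using ne by simp
      from phi_strict[OF _ this] assms have "- w * exp (- w) < v * exp v" by simp
      then show False using v by simp
    qed
  qed
qed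

lemma W_exists:
  fixes x :: real
  assumes x: "0 \<le> x" "x < exp (-1)"
  shows "\<exists>w. 0 \<le> w \<and> w < 1 \<and> w * exp (- w) = x"
proof -
  have c: "continuous_on {0..1} (\<lambda>y::real. y * exp (- y))" by (intro continuous_intros)
  obtain w where w: "0 \<le> w" "w \<le> 1" "w * exp (- w) = x"
    using IVT'[of "\<lambda>y::real. y * exp (- y)" 0 x 1, OF _ _ _ c] x by auto
  have "w \<noteq> 1" using w(3) x(2) by auto
  then show ?thesis using w by auto
qed

lemma Pn_le_W:
  assumes x: "0 < x" "x < exp (-1)"
  shows "Pn N x \<le> - 1 / x * lambertW (- x)"
proof -
  have ex: "\<exists>w. 0 \<le> w \<and> w < 1 \<and> w * exp (- w) = x" by (rule W_exists) (use x in auto)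
  then obtain w where w: "0 \<le> w" "w < 1" "w * exp (- w) = x" by blast
  have W: "lambertW (- x) = - w" using lambertW_eq[OF w(1,2)] w(3) by simp
  let ?T = "x * Pn N x"
  have T0: "0 \<le> ?T" using x aa_nonneg unfolding Pn_def by (intro mult_nonneg_nonneg sum_nonneg) auto
  have T1: "?T < 1" using T_lt1 x by simp
  have Tpsi: "?T * exp (- ?T) \<le> x" using psi_le[of x N] x by simp
  have "?T \<le> w"
  proof (rule ccontr)
    assume "\<not> ?T \<le> w"
    then have "w < ?T" by simp
    from psi_strict[OF w(1) this] T1 have "w * exp (- w) < ?T * exp (- ?T)" by simp
    then show False using Tpsi w(3) by simp
  qed
  then have "Pn N x \<le> w / x" using x by (simp add: field_simps)
  then show ?thesis using W by simp
qed

lemma lin_ineq: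
  fixes f f' L :: "real \<Rightarrow> real"
  assumes L: "continuous_on {t0..t} L"
    and d: "\<And>s. s \<in> {t0..t} \<Longrightarrow> (f has_real_derivative f' s) (at s within {t0..t})"
    and ge: "\<And>s. s \<in> {t0..t} \<Longrightarrow> L s * f s \<le> f' s"
    and f0: "0 \<le> f t0"
    and s: "s \<in> {t0..t}"
  shows "0 \<le> f s"
proof -
  define IL where "IL u = integral {t0..u} L" for u
  define h where "h u = f u * exp (- IL u)" for u
  have dIL: "(IL has_real_derivative L u) (at u within {t0..t})" if "u \<in> {t0..t}" for u
    unfolding IL_def[abs_def] has_real_derivative_iff_has_vector_derivative
    by (rule integral_has_vector_derivative[OF L that])
  have dh: "(h has_real_derivative exp (- IL u) * (f' u - L u * f u)) (at u within {t0..t})"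
    if u: "u \<in> {t0..t}" for u
  proof -
    have d1: "((\<lambda>u. - IL u) has_real_derivative - L u) (at u within {t0..t})"
      by (intro DERIV_minus dIL u)
    have d2: "((\<lambda>u. exp (- IL u)) has_real_derivative exp (- IL u) * (- L u)) (at u within {t0..t})"
      by (rule DERIV_chain'[OF d1 DERIV_exp])
    have d3: "(h has_real_derivative f' u * exp (- IL u) + exp (- IL u) * (- L u) * f u) (at u within {t0..t})"
      unfolding h_def[abs_def] by (rule DERIV_mult[OF d[OF u] d2])
    show ?thesis by (rule DERIV_cong[OF d3]) (simp add: algebra_simps)
  qed
  have hcont: "continuous_on {t0..t} h"
    using dh DERIV_continuous continuous_on_eq_continuous_within by blast
  have "h t0 \<le> h s"
  proof (cases "s = t0")
    case True then show ?thesis by simp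
  next
    case False
    then have ts: "t0 < s" using s by simp
    show ?thesis
    proof (rule DERIV_nonneg_imp_increasing_open[of t0 s h])
      show "t0 \<le> s" using ts by simp
      show "continuous_on {t0..s} h" by (rule continuous_on_subset[OF hcont]) (use s in auto)
      fix x assume x: "t0 < x" "x < s"
      have xt: "x < t" using x s by simp
      have "(h has_real_derivative exp (- IL x) * (f' x - L x * f x)) (at x)"
        using dh[of x] x xt by (simp add: at_within_Icc_at)
      moreover have "0 \<le> exp (- IL x) * (f' x - L x * f x)" using ge[of x] x xt by simp
      ultimately show "\<exists>y. (h has_real_derivative y) (at x) \<and> 0 \<le> y" by blast
    qed
  qed
  moreover have "h t0 = f t0" unfolding h_def IL_def by simp
  ultimately have "0 \<le> f s * exp (- IL s)" using f0 unfolding h_def by simp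
  then show ?thesis by (simp add: zero_le_mult_iff)
qed

lemma lambda_le:
  fixes k n :: nat assumes "1 \<le> k" "k < n"
  shows "real n \<le> (real k + 1) / real k * real (n - 1)"
proof -
  have "real k * real n \<le> (real k + 1) * real (n - 1)"
    using assms by (simp add: of_nat_diff algebra_simps)
  then show ?thesis using assms by (simp add: field_simps)
qed

lemma aa_sum_shift:
  "(\<Sum>j=1..Suc m. aa (j - 1) * aa (Suc m - j)) = (\<Sum>i\<le>m. aa i * aa (m - i))"
proof -
  have "(\<Sum>j=1..Suc m. aa (j - 1) * aa (Suc m - j)) = (\<Sum>j=Suc 0..Suc m. aa (j - 1) * aa (Suc m - j))" by simp
  also have "\<dots> = (\<Sum>i=0..m. aa i * aa (m - i))"
    by (subst sum.atLeast_Suc_atMost_Suc_shift) simp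
  finally show ?thesis by (simp add: atLeast0AtMost)
qed


locale odesys =
  fixes \<beta> t0 t :: real and k :: nat and C :: "nat \<Rightarrow> real \<Rightarrow> real"
  assumes beta: "\<beta> > 0" and k1: "k \<ge> 1" and t0pos: "0 < t0" and t0t: "t0 < t"
    and C1: "\<And>s. s \<in> {t0..t} \<Longrightarrow> C 1 s = 1"
    and Csmall: "\<And>n s. 2 \<le> n \<Longrightarrow> n \<le> k \<Longrightarrow> s \<in> {t0..t} \<Longrightarrow>
       (C n has_real_derivative
          ((real k + 1) / real k * real (n - 1) * Bfun \<beta> s * C n s
           + real n * Gam \<beta> s / 2 * (\<Sum>j=1..n-1. C j s * C (n - j) s)))
        (at s within {t0..t})"
    and Clarge: "\<And>n s. k < n \<Longrightarrow> n \<ge> 2 \<Longrightarrow> s \<in> {t0..t} \<Longrightarrow>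
       (C n has_real_derivative
          (real n * Bfun \<beta> s * C n s
           + real n * Gam \<beta> s / 2 * (\<Sum>j=1..n-1. C j s * C (n - j) s)))
        (at s within {t0..t})"
    and Cinit: "\<And>n. n \<ge> 2 \<Longrightarrow> C n t0 = 0"
begin

definition a :: real where "a = (real k + 1) / real k"

lemma spos: "s \<in> {t0..t} \<Longrightarrow> 0 < s"
  using t0pos by simp

lemma Bpos: "s \<in> {t0..t} \<Longrightarrow> 0 < Bfun \<beta> s"
  unfolding Bfun_def using beta gfun_pos[OF spos] by simp

lemma Gpos: "s \<in> {t0..t} \<Longrightarrow> 0 < Gam \<beta> s"
  unfolding Gam_def using beta gfun_pos[OF spos] spos[of s] pi_gt_zero by simp

lemma Bc: "continuous_on {t0..t} (Bfun \<beta>)"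
  unfolding Bfun_def[abs_def] by (intro continuous_intros gfun_continuous_on t0pos)

lemma Gc: "continuous_on {t0..t} (Gam \<beta>)"
  unfolding Gam_def[abs_def] by (intro continuous_intros gfun_continuous_on t0pos)

definition I :: "real \<Rightarrow> real" where "I s = integral {t0..s} (Bfun \<beta>)"
definition hJ :: "real \<Rightarrow> real" where "hJ r = Gam \<beta> r * exp (- (a * I r))"
definition J :: "real \<Rightarrow> real" where "J s = integral {t0..s} hJ"
definition T :: "real \<Rightarrow> real" where "T s = exp (a * I s) * J s"

lemma dI: "s \<in> {t0..t} \<Longrightarrow> (I has_real_derivative Bfun \<beta> s) (at s within {t0..t})"
  unfolding I_def[abs_def] has_real_derivative_iff_has_vector_derivative
  by (rule integral_has_vector_derivative[OF Bc])

lemma Ic: "continuous_on {t0..t} I"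
  using dI DERIV_continuous continuous_on_eq_continuous_within by blast

lemma hJc: "continuous_on {t0..t} hJ"
  unfolding hJ_def[abs_def] by (intro continuous_intros Gc Ic)

lemma dJ: "s \<in> {t0..t} \<Longrightarrow> (J has_real_derivative hJ s) (at s within {t0..t})"
  unfolding J_def[abs_def] has_real_derivative_iff_has_vector_derivative
  by (rule integral_has_vector_derivative[OF hJc])

lemma hJpos: "s \<in> {t0..t} \<Longrightarrow> 0 < hJ s"
  unfolding hJ_def using Gpos by simp

lemma J_nonneg: "s \<in> {t0..t} \<Longrightarrow> 0 \<le> J s"
  unfolding J_def
proof (rule integral_nonneg)
  assume s: "s \<in> {t0..t}"
  show "hJ integrable_on {t0..s}"
    by (rule integrable_continuous_interval, rule continuous_on_subset[OF hJc]) (use s in auto)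
  show "0 \<le> hJ x" if "x \<in> {t0..s}" for x using hJpos[of x] that s by auto
qed

lemma tau_eq: assumes s: "s \<in> {t0..t}" shows "tau \<beta> k t0 s = T s"
proof -
  have Bi: "Bfun \<beta> integrable_on {t0..s}"
    by (rule integrable_continuous_interval, rule continuous_on_subset[OF Bc]) (use s in auto)
  have hi: "hJ integrable_on {t0..s}"
    by (rule integrable_continuous_interval, rule continuous_on_subset[OF hJc]) (use s in auto)
  have "tau \<beta> k t0 s = integral {t0..s} (\<lambda>r. exp (a * I s) * hJ r)"
    unfolding tau_def a_def[symmetric]
  proof (rule integral_cong)
    fix r assume r: "r \<in> {t0..s}"
    have "I r + integral {r..s} (Bfun \<beta>) = I s"
      unfolding I_def using r by (intro Henstock_Kurzweil_Integration.integral_combine Bi) auto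
    then have "integral {r..s} (Bfun \<beta>) = I s - I r" by linarith
    then have e: "a * integral {r..s} (Bfun \<beta>) = a * I s + - (a * I r)" by (simp add: right_diff_distrib)
    show "Gam \<beta> r * exp (a * integral {r..s} (Bfun \<beta>)) = exp (a * I s) * hJ r"
      unfolding hJ_def e exp_add by simp
  qed
  also have "\<dots> = exp (a * I s) * J s" unfolding J_def by (rule integral_mult[OF hi, symmetric])
  finally show ?thesis unfolding T_def .
qed

lemma dT: assumes s: "s \<in> {t0..t}"
  shows "(T has_real_derivative a * Bfun \<beta> s * T s + Gam \<beta> s) (at s within {t0..t})"
proof -
  have d1: "((\<lambda>s. a * I s) has_real_derivative a * Bfun \<beta> s) (at s within {t0..t})"
    by (intro DERIV_cmult dI s)
  have d2: "((\<lambda>s. exp (a * I s)) has_real_derivative exp (a * I s) * (a * Bfun \<beta> s)) (at s within {t0..t})"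
    by (rule DERIV_chain'[OF d1 DERIV_exp])
  have d3: "(T has_real_derivative exp (a * I s) * (a * Bfun \<beta> s) * J s + hJ s * exp (a * I s)) (at s within {t0..t})"
    unfolding T_def[abs_def] by (rule DERIV_mult[OF d2 dJ[OF s]])
  have e: "hJ s * exp (a * I s) = Gam \<beta> s"
    unfolding hJ_def by (simp add: mult.assoc exp_minus_inverse[of "- (a * I s)", simplified] exp_minus)
  have "exp (a * I s) * (a * Bfun \<beta> s) * J s + hJ s * exp (a * I s) = a * Bfun \<beta> s * T s + Gam \<beta> s"
    unfolding e T_def by (simp add: algebra_simps)
  then show ?thesis by (rule DERIV_cong[OF d3])
qed

lemma T0: "T t0 = 0" unfolding T_def J_def by simp

lemma T_nonneg: "s \<in> {t0..t} \<Longrightarrow> 0 \<le> T s"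
  unfolding T_def using J_nonneg by simp

lemma J_pos: "0 < J t"
proof -
  obtain m where m: "m \<in> {t0..t}" "\<forall>y\<in>{t0..t}. hJ m \<le> hJ y"
    using continuous_attains_inf[OF compact_Icc _ hJc] t0t by auto
  have mp: "0 < hJ m" using hJpos[OF m(1)] .
  have "hJ m * (t - t0) = integral {t0..t} (\<lambda>r. hJ m)" using t0t by simp
  also have "\<dots> \<le> J t" unfolding J_def
    by (rule integral_le) (use m(2) integrable_continuous_interval[OF hJc] in auto)
  finally show ?thesis using mp t0t by (smt (verit) mult_pos_pos)
qed

lemma T_pos: "0 < T t" unfolding T_def using J_pos by simp

definition lam :: "nat \<Rightarrow> real" where
  "lam n = (if n \<le> k then a * real (n - 1) else real n)"

lemma lam_le: "2 \<le> n \<Longrightarrow> lam n \<le> a * real (n - 1)"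
  unfolding lam_def a_def using lambda_le[OF k1, of n] by auto

definition src :: "nat \<Rightarrow> real \<Rightarrow> real" where
  "src n s = real n * Gam \<beta> s / 2 * (\<Sum>j=1..n-1. C j s * C (n - j) s)"

lemma dC: "2 \<le> n \<Longrightarrow> s \<in> {t0..t} \<Longrightarrow>
  (C n has_real_derivative lam n * Bfun \<beta> s * C n s + src n s) (at s within {t0..t})"
  unfolding lam_def src_def a_def
  using Csmall[of n s] Clarge[of n s] by (cases "n \<le> k") auto

lemma C_nonneg: "1 \<le> n \<Longrightarrow> s \<in> {t0..t} \<Longrightarrow> 0 \<le> C n s"
proof (induction n arbitrary: s rule: less_induct)
  case (less n)
  show ?case
  proof (cases "n = 1")
    case True then show ?thesis using C1 less.prems by simp
  next
    case False
    then have n2: "2 \<le> n" using less.prems by simp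
    show ?thesis
    proof (rule lin_ineq[where f="C n" and s=s and L="\<lambda>s. lam n * Bfun \<beta> s" and f'="\<lambda>s. lam n * Bfun \<beta> s * C n s + src n s"])
      show "continuous_on {t0..t} (\<lambda>s. lam n * Bfun \<beta> s)" by (intro continuous_intros Bc)
      show "(C n has_real_derivative lam n * Bfun \<beta> s * C n s + src n s) (at s within {t0..t})"
        if "s \<in> {t0..t}" for s by (rule dC[OF n2 that])
      show "lam n * Bfun \<beta> s * C n s \<le> lam n * Bfun \<beta> s * C n s + src n s" if s: "s \<in> {t0..t}" for s
      proof -
        have "0 \<le> (\<Sum>j=1..n-1. C j s * C (n - j) s)"
          by (intro sum_nonneg mult_nonneg_nonneg less.IH) (use s n2 in auto)
        then have "0 \<le> src n s" unfolding src_def using Gpos[OF s] by simp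
        then show ?thesis by simp
      qed
      show "0 \<le> C n t0" using Cinit[OF n2] by simp
      show "s \<in> {t0..t}" by (rule less.prems)
    qed
  qed
qed

definition M :: "nat \<Rightarrow> real \<Rightarrow> real" where "M n s = aa (n - 1) * T s ^ (n - 1)"

lemma M_nonneg: "s \<in> {t0..t} \<Longrightarrow> 0 \<le> M n s"
  unfolding M_def using aa_nonneg T_nonneg by simp

lemma sumM: "(\<Sum>j=1..Suc m. M j s * M (Suc (Suc m) - j) s) = T s ^ m * (\<Sum>i\<le>m. aa i * aa (m - i))"
proof -
  have "(\<Sum>j=1..Suc m. M j s * M (Suc (Suc m) - j) s) = (\<Sum>j=1..Suc m. T s ^ m * (aa (j - 1) * aa (Suc m - j)))"
  proof (rule sum.cong[OF refl])
    fix j assume j: "j \<in> {1..Suc m}"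
    then have e: "j - 1 + (Suc m - j) = m" by auto
    have "M j s * M (Suc (Suc m) - j) s = aa (j - 1) * aa (Suc m - j) * (T s ^ (j - 1) * T s ^ (Suc m - j))"
      unfolding M_def using j by (simp add: Suc_diff_le)
    also have "T s ^ (j - 1) * T s ^ (Suc m - j) = T s ^ m" by (simp only: power_add[symmetric] e)
    finally show "M j s * M (Suc (Suc m) - j) s = T s ^ m * (aa (j - 1) * aa (Suc m - j))" by simp
  qed
  also have "\<dots> = T s ^ m * (\<Sum>i\<le>m. aa i * aa (m - i))"
    by (simp only: sum_distrib_left[symmetric] aa_sum_shift)
  finally show ?thesis .
qed

lemma dM: assumes n2: "2 \<le> n" and s: "s \<in> {t0..t}"
  shows "(M n has_real_derivative a * real (n - 1) * Bfun \<beta> s * M n s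
           + real n * Gam \<beta> s / 2 * (\<Sum>j=1..n-1. M j s * M (n - j) s)) (at s within {t0..t})"
proof -
  obtain m where n: "n = Suc (Suc m)" using n2 by (metis add_2_eq_Suc le_Suc_ex)
  have d: "(M n has_real_derivative aa (Suc m) * (real (Suc m) * ((a * Bfun \<beta> s * T s + Gam \<beta> s) * T s ^ m))) (at s within {t0..t})"
    unfolding M_def[abs_def] n using DERIV_cmult[OF DERIV_power[OF dT[OF s], where n="Suc m"], of "aa (Suc m)"]
    by (simp del: aa.simps)
  have S: "(\<Sum>j=1..n-1. M j s * M (n - j) s) = T s ^ m * (\<Sum>i\<le>m. aa i * aa (m - i))"
    unfolding n using sumM[where m=m and s=s] by simp
  have R: "(real m + 1) * aa (Suc m) = (real m + 2) / 2 * (\<Sum>i\<le>m. aa i * aa (m - i))"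
    by (rule aa_rec)
  have "aa (Suc m) * (real (Suc m) * ((a * Bfun \<beta> s * T s + Gam \<beta> s) * T s ^ m))
      = a * real (Suc m) * Bfun \<beta> s * (aa (Suc m) * (T s ^ m * T s)) + Gam \<beta> s * T s ^ m * ((real m + 1) * aa (Suc m))"
    by (simp add: algebra_simps del: aa.simps)
  also have "\<dots> = a * real (Suc m) * Bfun \<beta> s * (aa (Suc m) * (T s ^ m * T s)) + Gam \<beta> s * T s ^ m * ((real m + 2) / 2 * (\<Sum>i\<le>m. aa i * aa (m - i)))"
    by (simp only: R)
  also have "\<dots> = a * real (n - 1) * Bfun \<beta> s * M n s + real n * Gam \<beta> s / 2 * (\<Sum>j=1..n-1. M j s * M (n - j) s)"
    unfolding S unfolding n M_def by (simp add: algebra_simps del: aa.simps)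
  finally show ?thesis using d by (simp del: aa.simps)
qed

lemma C_le_M: "1 \<le> n \<Longrightarrow> s \<in> {t0..t} \<Longrightarrow> C n s \<le> M n s"
proof (induction n arbitrary: s rule: less_induct)
  case (less n)
  show ?case
  proof (cases "n = 1")
    case True then show ?thesis using C1 less.prems by (simp add: M_def)
  next
    case False
    then have n2: "2 \<le> n" using less.prems by simp
    define Mp where "Mp s = a * real (n - 1) * Bfun \<beta> s * M n s
           + real n * Gam \<beta> s / 2 * (\<Sum>j=1..n-1. M j s * M (n - j) s)" for s
    have "0 \<le> M n s - C n s"
    proof (rule lin_ineq[where f="\<lambda>s. M n s - C n s" and s=s and L="\<lambda>s. a * real (n - 1) * Bfun \<beta> s"
          and f'="\<lambda>s. Mp s - (lam n * Bfun \<beta> s * C n s + src n s)"])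
      show "continuous_on {t0..t} (\<lambda>s. a * real (n - 1) * Bfun \<beta> s)" by (intro continuous_intros Bc)
      show "((\<lambda>s. M n s - C n s) has_real_derivative Mp s - (lam n * Bfun \<beta> s * C n s + src n s)) (at s within {t0..t})"
        if "s \<in> {t0..t}" for s
        unfolding Mp_def by (intro DERIV_diff dM dC n2 that)
      show "a * real (n - 1) * Bfun \<beta> s * (M n s - C n s) \<le> Mp s - (lam n * Bfun \<beta> s * C n s + src n s)"
        if s: "s \<in> {t0..t}" for s
      proof -
        have Cn: "0 \<le> C n s" using C_nonneg[OF _ s] n2 by simp
        have B: "0 \<le> Bfun \<beta> s" using Bpos[OF s] by simp
        have 1: "lam n * Bfun \<beta> s * C n s \<le> a * real (n - 1) * Bfun \<beta> s * C n s"
          using lam_le[OF n2] B Cn by (intro mult_right_mono) auto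
        have 2: "(\<Sum>j=1..n-1. C j s * C (n - j) s) \<le> (\<Sum>j=1..n-1. M j s * M (n - j) s)"
        proof (rule sum_mono)
          fix j assume j: "j \<in> {1..n-1}"
          have "C j s \<le> M j s" "C (n - j) s \<le> M (n - j) s" using j n2 s by (auto intro!: less.IH)
          moreover have "0 \<le> C j s" "0 \<le> C (n - j) s" using j n2 s by (auto intro!: C_nonneg)
          ultimately show "C j s * C (n - j) s \<le> M j s * M (n - j) s" by (intro mult_mono) auto
        qed
        have 3: "src n s \<le> real n * Gam \<beta> s / 2 * (\<Sum>j=1..n-1. M j s * M (n - j) s)"
          unfolding src_def using 2 Gpos[OF s] by (intro mult_left_mono) auto
        show ?thesis unfolding Mp_def using 1 3 by (simp add: algebra_simps)
      qed
      show "0 \<le> M n t0 - C n t0" using Cinit[OF n2] n2 by (simp add: M_def T0 aa_nonneg)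
      show "s \<in> {t0..t}" by (rule less.prems)
    qed
    then show ?thesis by simp
  qed
qed

end

theorem proposition3p4:
  fixes \<beta> t0 t z :: real and k :: nat and C :: "nat \<Rightarrow> real \<Rightarrow> real"
  assumes "\<beta> > 0" and "k \<ge> 1" and "0 < t0" and "t0 < t"
    and C1: "\<And>s. s \<in> {t0..t} \<Longrightarrow> C 1 s = 1"
    and Csmall: "\<And>n s. 2 \<le> n \<Longrightarrow> n \<le> k \<Longrightarrow> s \<in> {t0..t} \<Longrightarrow>
       (C n has_real_derivative
          ((real k + 1) / real k * real (n - 1) * Bfun \<beta> s * C n s
           + real n * Gam \<beta> s / 2 * (\<Sum>j=1..n-1. C j s * C (n - j) s)))
        (at s within {t0..t})"
    and Clarge: "\<And>n s. k < n \<Longrightarrow> n \<ge> 2 \<Longrightarrow> s \<in> {t0..t} \<Longrightarrow>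
       (C n has_real_derivative
          (real n * Bfun \<beta> s * C n s
           + real n * Gam \<beta> s / 2 * (\<Sum>j=1..n-1. C j s * C (n - j) s)))
        (at s within {t0..t})"
    and Cinit: "\<And>n. n \<ge> 2 \<Longrightarrow> C n t0 = 0"
    and "z \<ge> 0"
    and "exp 1 * z * tau \<beta> k t0 t < 1"
  shows "summable (\<lambda>n. C (n + 1) t * z ^ n)
    \<and> (\<Sum>n. C (n + 1) t * z ^ n)
        \<le> (if z = 0 then 1
            else - 1 / (tau \<beta> k t0 t * z) * lambertW (- tau \<beta> k t0 t * z))"
proof -
  interpret odesys \<beta> t0 t k C
  proof
    show "\<beta> > 0" "k \<ge> 1" "0 < t0" "t0 < t" by fact+
    show "\<And>s. s \<in> {t0..t} \<Longrightarrow> C 1 s = 1" by (rule C1)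
    show "\<And>n s. 2 \<le> n \<Longrightarrow> n \<le> k \<Longrightarrow> s \<in> {t0..t} \<Longrightarrow>
       (C n has_real_derivative
          ((real k + 1) / real k * real (n - 1) * Bfun \<beta> s * C n s
           + real n * Gam \<beta> s / 2 * (\<Sum>j=1..n-1. C j s * C (n - j) s)))
        (at s within {t0..t})" by (rule Csmall)
    show "\<And>n s. k < n \<Longrightarrow> n \<ge> 2 \<Longrightarrow> s \<in> {t0..t} \<Longrightarrow>
       (C n has_real_derivative
          (real n * Bfun \<beta> s * C n s
           + real n * Gam \<beta> s / 2 * (\<Sum>j=1..n-1. C j s * C (n - j) s)))
        (at s within {t0..t})" by (rule Clarge)
    show "\<And>n. n \<ge> 2 \<Longrightarrow> C n t0 = 0" by (rule Cinit)
  qed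
  have tt: "t \<in> {t0..t}" using \<open>t0 < t\<close> by simp
  have Cbnd: "0 \<le> C (n + 1) t \<and> C (n + 1) t \<le> aa n * T t ^ n" for n
    using C_nonneg[OF _ tt, of "n + 1"] C_le_M[OF _ tt, of "n + 1"] by (simp add: M_def)
  have tauT: "tau \<beta> k t0 t = T t" by (rule tau_eq[OF tt])
  show ?thesis
  proof (cases "z = 0")
    case True
    then show ?thesis using C1[OF tt] by simp
  next
    case False
    then have zpos: "0 < z" using \<open>z \<ge> 0\<close> by simp
    define x where "x = T t * z"
    have xpos: "0 < x" unfolding x_def using T_pos zpos by simp
    have "exp 1 * x < 1" using \<open>exp 1 * z * tau \<beta> k t0 t < 1\<close> tauT by (simp add: x_def mult_ac)
    then have "x < 1 / exp 1" by (simp add: field_simps)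
    then have xlt: "x < exp (-1)" by (simp add: exp_minus divide_inverse)
    define R where "R = - 1 / x * lambertW (- x)"
    have tnn: "0 \<le> C (n + 1) t * z ^ n" for n using Cbnd[of n] zpos by simp
    have tle: "C (n + 1) t * z ^ n \<le> aa n * x ^ n" for n
    proof -
      have "C (n + 1) t * z ^ n \<le> aa n * T t ^ n * z ^ n"
        using Cbnd[of n] zpos by (intro mult_right_mono) auto
      also have "\<dots> = aa n * x ^ n" by (simp add: x_def power_mult_distrib)
      finally show ?thesis .
    qed
    have ps: "(\<Sum>n<N. C (n + 1) t * z ^ n) \<le> R" for N
    proof -
      have "(\<Sum>n<N. C (n + 1) t * z ^ n) \<le> (\<Sum>n<N. aa n * x ^ n)" by (intro sum_mono tle)
      also have "\<dots> = Pn N x" by (simp add: Pn_def)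
      also have "\<dots> \<le> R" unfolding R_def by (rule Pn_le_W[OF xpos xlt])
      finally show ?thesis .
    qed
    have sm: "summable (\<lambda>n. C (n + 1) t * z ^ n)" by (rule summableI_nonneg_bounded[OF tnn ps])
    have le: "(\<Sum>n. C (n + 1) t * z ^ n) \<le> R" by (rule suminf_le_const[OF sm ps])
    have "R = - 1 / (tau \<beta> k t0 t * z) * lambertW (- tau \<beta> k t0 t * z)"
      unfolding R_def x_def tauT by simp
    then show ?thesis using sm le False by simp
  qed
qed

end
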